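(* Let $g_1,\dots,g_r\in\mathbb R[X_1,\dots,X_n]$, $S=\mathcal S(\mathbf g)$, and assume the CQC holds at $z\in S$. Then there exist $\epsilon''=\epsilon''(z)>0$ and $\mathfrak c''=\mathfrak c''(z)>0$ such that for all $y\in[-1,1]^n$ with $D(y)=\operatorname{dist}(y,S)=\|y-z\|_2$ and $D(y)\le\epsilon''$, we have $D(y)\le\mathfrak c''\,G(y)$.
   Context: $\mathcal S(\mathbf g)=\{x:g_i(x)\ge0\ \forall i\}$; $G(y)=|\min\{g_1(y),\dots,g_r(y),0\}|$, $D(y)=\operatorname{dist}(y,S)$ (Euclidean) on $[-1,1]^n$. Active constraints at $z$: the $g_i$ with $g_i(z)=0$; CQC at $z$: the gradients of the active constraints at $z$ are linearly independent. *)

theory Defs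
  imports "HOL-Analysis.Analysis"
begin

definition grad :: "(real^'n \<Rightarrow> real) \<Rightarrow> real^'n \<Rightarrow> real^'n" where
  "grad f x = (\<chi> j. frechet_derivative f (at x) (axis j 1))"

definition semialg_set :: "nat \<Rightarrow> (nat \<Rightarrow> real^'n \<Rightarrow> real) \<Rightarrow> (real^'n) set" where
  "semialg_set r g = {x. \<forall>i\<in>{1..r}. g i x \<ge> 0}"

definition Gviol :: "nat \<Rightarrow> (nat \<Rightarrow> real^'n \<Rightarrow> real) \<Rightarrow> real^'n \<Rightarrow> real" where
  "Gviol r g y = \<bar>Min (insert 0 ((\<lambda>i. g i y) ` {1..r}))\<bar>"

definition active :: "nat \<Rightarrow> (nat \<Rightarrow> real^'n \<Rightarrow> real) \<Rightarrow> real^'n \<Rightarrow> nat set" where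
  "active r g z = {i\<in>{1..r}. g i z = 0}"

definition lin_indep_family :: "'i set \<Rightarrow> ('i \<Rightarrow> 'a::real_vector) \<Rightarrow> bool" where
  "lin_indep_family A v \<longleftrightarrow> (\<forall>c. (\<Sum>i\<in>A. c i *\<^sub>R v i) = 0 \<longrightarrow> (\<forall>i\<in>A. c i = 0))"

definition CQC :: "nat \<Rightarrow> (nat \<Rightarrow> real^'n \<Rightarrow> real) \<Rightarrow> real^'n \<Rightarrow> bool" where
  "CQC r g z \<longleftrightarrow> lin_indep_family (active r g z) (\<lambda>i. grad (g i) z)"

end

theory Submission imports Defs begin

lemma poly_deriv:
  fixes f :: "'a::real_normed_vector \<Rightarrow> real"
  assumes "real_polynomial_function f"
  shows "\<exists>D. (\<forall>x. (f has_derivative D x) (at x)) \<and> (\<forall>h. continuous_on UNIV (\<lambda>x. D x h))"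
  using assms
proof (induction f rule: real_polynomial_function.induct)
  case (linear f)
  then show ?case by (intro exI[of _ "\<lambda>x. f"]) (auto intro: bounded_linear_imp_has_derivative)
next
  case (const c)
  then show ?case by (intro exI[of _ "\<lambda>x h. 0"]) auto
next
  case (add f g)
  then obtain D1 D2 where d1: "\<forall>x. (f has_derivative D1 x) (at x)" "\<forall>h. continuous_on UNIV (\<lambda>x. D1 x h)"
    and d2: "\<forall>x. (g has_derivative D2 x) (at x)" "\<forall>h. continuous_on UNIV (\<lambda>x. D2 x h)" by blast
  show ?case
    by (rule exI[of _ "\<lambda>x h. D1 x h + D2 x h"]) (use d1 d2 in \<open>auto intro!: has_derivative_add continuous_intros\<close>)
next
  case (mult f g)
  then obtain D1 D2 where d1: "\<forall>x. (f has_derivative D1 x) (at x)" "\<forall>h. continuous_on UNIV (\<lambda>x. D1 x h)"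
    and d2: "\<forall>x. (g has_derivative D2 x) (at x)" "\<forall>h. continuous_on UNIV (\<lambda>x. D2 x h)" by blast
  have cf: "continuous_on UNIV f" "continuous_on UNIV g"
    using mult.hyps continuous_real_polymonial_function continuous_at_imp_continuous_on by blast+
  show ?case
    by (rule exI[of _ "\<lambda>x h. f x * D2 x h + D1 x h * g x"]) (use d1 d2 cf in \<open>auto intro!: has_derivative_mult continuous_intros\<close>)
qed

lemma lin_vec:
  fixes L :: "real^'n \<Rightarrow> real"
  assumes "linear L"
  shows "L d = (\<chi> j. L (axis j 1)) \<bullet> d"
proof -
  have "L d = L (\<Sum>i\<in>UNIV. (d$i) *\<^sub>R axis i 1)"
    using basis_expansion[of d] by (simp add: scalar_mult_eq_scaleR)
  also have "\<dots> = (\<Sum>i\<in>UNIV. (d$i) * L (axis i 1))"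
    using assms by (simp add: linear_sum linear_scale)
  also have "\<dots> = (\<chi> j. L (axis j 1)) \<bullet> d"
    by (simp add: inner_vec_def mult.commute)
  finally show ?thesis .
qed

lemma grad_inner:
  assumes "(f has_derivative D) (at x)"
  shows "grad f x \<bullet> d = D d"
  using lin_vec[of D d] assms frechet_derivative_at[OF assms] unfolding grad_def
  by (metis has_derivative_linear)

lemma span_image_repr:
  fixes v :: "'i \<Rightarrow> 'a::real_vector"
  assumes "finite B"
  shows "x \<in> span (v ` B) \<Longrightarrow> \<exists>c. x = (\<Sum>j\<in>B. c j *\<^sub>R v j)"
  using assms
proof (induction B arbitrary: x rule: finite_induct)
  case empty
  then show ?case by simp
next
  case (insert b B)
  from insert.prems have "x \<in> span (insert (v b) (v ` B))" by simp
  then obtain k where "x - k *\<^sub>R v b \<in> span (v ` B)" by (auto simp: span_breakdown_eq)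
  then obtain c where c: "x - k *\<^sub>R v b = (\<Sum>j\<in>B. c j *\<^sub>R v j)" using insert.IH by blast
  have "(\<Sum>j\<in>insert b B. (c(b := k)) j *\<^sub>R v j) = k *\<^sub>R v b + (\<Sum>j\<in>B. c j *\<^sub>R v j)"
    using insert.hyps by (simp add: sum.insert) (intro sum.cong, auto)
  also have "\<dots> = x" using c by (simp add: algebra_simps)
  finally show ?case by metis
qed

lemma exists_dir:
  fixes v :: "nat \<Rightarrow> 'a::euclidean_space"
  assumes fin: "finite A" and li: "lin_indep_family A v"
  shows "\<exists>d. \<forall>i\<in>A. v i \<bullet> d = 1"
proof -
  have "\<exists>u. (\<forall>j\<in>A. j \<noteq> i \<longrightarrow> u \<bullet> v j = 0) \<and> u \<bullet> v i > 0" if iA: "i \<in> A" for i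
  proof -
    obtain y w where y: "y \<in> span (v ` (A - {i}))"
      and w: "\<And>x. x \<in> span (v ` (A - {i})) \<Longrightarrow> orthogonal w x" and vi: "v i = y + w"
      using orthogonal_subspace_decomp_exists[of "v ` (A - {i})" "v i"] by metis
    have w0: "w \<noteq> 0"
    proof
      assume "w = 0"
      then have "v i \<in> span (v ` (A - {i}))" using vi y by simp
      then obtain c where c: "v i = (\<Sum>j\<in>A - {i}. c j *\<^sub>R v j)"
        using span_image_repr[of "A - {i}" "v i" v] fin by blast
      have "(\<Sum>j\<in>A. (c(i := -1)) j *\<^sub>R v j) = - v i + (\<Sum>j\<in>A - {i}. c j *\<^sub>R v j)"
        using iA fin by (simp add: sum.remove)
      also have "\<dots> = 0" using c by simp
      finally have "\<forall>j\<in>A. (c(i := -1)) j = 0" using li unfolding lin_indep_family_def by blast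
      then show False using iA by force
    qed
    have "w \<bullet> v j = 0" if "j \<in> A" "j \<noteq> i" for j
      using w[of "v j"] that by (simp add: orthogonal_def span_base)
    moreover have "w \<bullet> y = 0" using w[OF y] by (simp add: orthogonal_def)
    then have "w \<bullet> v i = w \<bullet> w" using vi by (simp add: inner_add_right)
    then have "w \<bullet> v i > 0" using w0 by simp
    ultimately show ?thesis by blast
  qed
  then obtain u where u: "\<And>i. i \<in> A \<Longrightarrow> (\<forall>j\<in>A. j \<noteq> i \<longrightarrow> u i \<bullet> v j = 0) \<and> u i \<bullet> v i > 0"
    by metis
  define d where "d = (\<Sum>i\<in>A. (1 / (u i \<bullet> v i)) *\<^sub>R u i)"
  have "v k \<bullet> d = 1" if kA: "k \<in> A" for k
  proof -
    have "v k \<bullet> d = (\<Sum>i\<in>A. (1 / (u i \<bullet> v i)) * (u i \<bullet> v k))"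
      unfolding d_def by (simp add: inner_sum_right inner_commute)
    also have "\<dots> = (1 / (u k \<bullet> v k)) * (u k \<bullet> v k)"
      using kA fin u by (subst sum.remove[of A k]) (auto intro!: sum.neutral)
    also have "\<dots> = 1" using u[OF kA] by simp
    finally show ?thesis .
  qed
  then show ?thesis by blast
qed


lemma cont_ev:
  fixes f :: "'a::metric_space \<Rightarrow> real"
  assumes "continuous (at z) f" "f z > a"
  shows "eventually (\<lambda>x. f x > a) (nhds z)"
proof -
  obtain e where "e > 0" "\<forall>x'. dist x' z < e \<longrightarrow> dist (f x') (f z) < f z - a"
    using assms unfolding continuous_at_eps_delta by (metis diff_gt_0_iff_gt)
  then show ?thesis unfolding eventually_nhds_metric
    by (intro exI[of _ e]) (auto simp: dist_real_def abs_less_iff)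
qed

theorem mainTheorem12:
  fixes r :: nat and g :: "nat \<Rightarrow> real^'n \<Rightarrow> real" and z :: "real^'n"
  assumes poly: "\<forall>i\<in>{1..r}. real_polynomial_function (g i)"
    and zS: "z \<in> semialg_set r g"
    and cqc: "CQC r g z"
  shows "\<exists>\<epsilon>>0. \<exists>c>0. \<forall>y::real^'n. (\<forall>j. \<bar>y $ j\<bar> \<le> 1) \<longrightarrow>
           infdist y (semialg_set r g) = dist y z \<longrightarrow>
           infdist y (semialg_set r g) \<le> \<epsilon> \<longrightarrow>
           infdist y (semialg_set r g) \<le> c * Gviol r g y"
proof -
  define A where "A = active r g z"
  have Asub: "A \<subseteq> {1..r}" unfolding A_def active_def by auto
  then have finA: "finite A" using finite_subset by blast
  obtain d where d: "\<And>i. i \<in> A \<Longrightarrow> grad (g i) z \<bullet> d = 1"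
    using exists_dir[OF finA, of "\<lambda>i. grad (g i) z"] cqc unfolding CQC_def A_def by blast
  have "\<forall>i\<in>{1..r}. \<exists>D. (\<forall>x. (g i has_derivative D x) (at x)) \<and> (\<forall>h. continuous_on UNIV (\<lambda>x. D x h))"
    using poly poly_deriv by blast
  then obtain Dg where Dg: "\<And>i x. i \<in> {1..r} \<Longrightarrow> (g i has_derivative Dg i x) (at x)"
    and Dgc: "\<And>i h. i \<in> {1..r} \<Longrightarrow> continuous_on UNIV (\<lambda>x. Dg i x h)"
    by metis
  have gc: "\<And>i x. i \<in> {1..r} \<Longrightarrow> continuous (at x) (g i)"
    using poly continuous_real_polymonial_function by blast
  have gz: "\<And>i. i \<in> {1..r} \<Longrightarrow> g i z \<ge> 0" using zS unfolding semialg_set_def by blast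
  have "eventually (\<lambda>x. \<forall>i\<in>{1..r}. (i \<in> A \<longrightarrow> Dg i x d > 1/2) \<and> (i \<notin> A \<longrightarrow> g i x > 0)) (nhds z)"
  proof (rule eventually_ball_finite, simp, intro ballI)
    fix i assume i: "i \<in> {1..r}"
    show "eventually (\<lambda>x. (i \<in> A \<longrightarrow> Dg i x d > 1/2) \<and> (i \<notin> A \<longrightarrow> g i x > 0)) (nhds z)"
    proof (cases "i \<in> A")
      case True
      have "Dg i z d = 1" using d[OF True] grad_inner[OF Dg[OF i]] by simp
      moreover have "continuous (at z) (\<lambda>x. Dg i x d)"
        using Dgc[OF i] continuous_on_eq_continuous_at open_UNIV by blast
      ultimately have "eventually (\<lambda>x. Dg i x d > 1/2) (nhds z)" by (intro cont_ev) auto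
      then show ?thesis by (rule eventually_mono) (use True in auto)
    next
      case False
      then have "g i z > 0" using gz[OF i] i unfolding A_def active_def by force
      then have "eventually (\<lambda>x. g i x > 0) (nhds z)" using cont_ev gc[OF i] by blast
      then show ?thesis by (rule eventually_mono) (use False in auto)
    qed
  qed
  then obtain \<delta> where \<delta>0: "\<delta> > 0"
    and \<delta>: "\<And>x. dist x z < \<delta> \<Longrightarrow> \<forall>i\<in>{1..r}. (i \<in> A \<longrightarrow> Dg i x d > 1/2) \<and> (i \<notin> A \<longrightarrow> g i x > 0)"
    unfolding eventually_nhds_metric by blast
  define \<kappa> where "\<kappa> = \<delta> / (4 * (norm d + 1))"
  have nd: "norm d + 1 > 0" by (metis add_nonneg_pos norm_ge_zero zero_less_one)
  have \<kappa>0: "\<kappa> > 0" unfolding \<kappa>_def using \<delta>0 nd by simp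
  have "eventually (\<lambda>x. \<forall>i\<in>{1..r}. g i x > - \<kappa>) (nhds z)"
  proof (rule eventually_ball_finite, simp, intro ballI)
    fix i assume i: "i \<in> {1..r}"
    show "eventually (\<lambda>x. g i x > - \<kappa>) (nhds z)"
      using cont_ev[OF gc[OF i], of "-\<kappa>"] gz[OF i] \<kappa>0 by simp
  qed
  then obtain \<eta> where \<eta>0: "\<eta> > 0" and \<eta>: "\<And>x. dist x z < \<eta> \<Longrightarrow> \<forall>i\<in>{1..r}. g i x > - \<kappa>"
    unfolding eventually_nhds_metric by blast
  define \<epsilon> where "\<epsilon> = min \<eta> \<delta> / 2"
  define c where "c = 2 * norm d + 1"
  have key: "infdist y (semialg_set r g) \<le> c * Gviol r g y" if yz: "dist y z \<le> \<epsilon>" for y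
  proof -
    define m where "m = Min (insert 0 ((\<lambda>i. g i y) ` {1..r}))"
    have m0: "m \<le> 0" unfolding m_def by simp
    have mg: "\<And>i. i \<in> {1..r} \<Longrightarrow> m \<le> g i y" unfolding m_def by (intro Min_le) auto
    have "dist y z < \<eta>" using yz \<eta>0 \<delta>0 unfolding \<epsilon>_def by linarith
    then have mk: "m \<ge> - \<kappa>" unfolding m_def using \<eta> \<kappa>0 by (auto simp: less_imp_le)
    define G where "G = - m"
    have GG: "Gviol r g y = G" unfolding Gviol_def G_def m_def[symmetric] using m0 by simp
    define t where "t = 2 * G"
    define w where "w = y + t *\<^sub>R d"
    have t0: "t \<ge> 0" unfolding t_def G_def using m0 by simp
    have near: "dist (y + s *\<^sub>R d) z < \<delta>" if "0 \<le> s" "s \<le> t" for s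
    proof -
      have "dist (y + s *\<^sub>R d) z \<le> dist y z + norm (s *\<^sub>R d)"
      proof -
        have 1: "dist (y + s *\<^sub>R d) z \<le> dist (y + s *\<^sub>R d) y + dist y z" by (rule dist_triangle)
        have 2: "dist (y + s *\<^sub>R d) y = norm (s *\<^sub>R d)" by (simp add: dist_norm)
        show ?thesis using 1 2 by linarith
      qed
      also have "norm (s *\<^sub>R d) \<le> t * norm d" using that by (simp add: mult_right_mono)
      also have "t * norm d \<le> 2 * \<kappa> * norm d" unfolding t_def G_def using mk
        by (intro mult_right_mono) auto
      also have "2 * \<kappa> * norm d = (\<delta> / 2) * (norm d / (norm d + 1))"
        unfolding \<kappa>_def using nd by (simp add: field_simps)
      also have "\<dots> < (\<delta> / 2) * 1"
        by (intro mult_strict_left_mono) (use nd \<delta>0 in \<open>auto simp: divide_less_eq_1\<close>)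
      finally show ?thesis using yz \<delta>0 unfolding \<epsilon>_def by linarith
    qed
    have wS: "w \<in> semialg_set r g"
      unfolding semialg_set_def
    proof (intro CollectI ballI)
      fix i assume i: "i \<in> {1..r}"
      show "g i w \<ge> 0"
      proof (cases "i \<in> A")
        case False
        then have "0 < g i w" using \<delta>[OF near[OF t0 order_refl]] i unfolding w_def by blast
        then show ?thesis by simp
      next
        case True
        show ?thesis
        proof (cases "t = 0")
          case True
          then show ?thesis using mg[OF i] unfolding w_def t_def G_def by simp
        next
          case False
          then have tp: "0 < t" using t0 by simp
          have der: "((\<lambda>s. g i (y + s *\<^sub>R d)) has_real_derivative Dg i (y + s *\<^sub>R d) d) (at s)" for s
          proof (rule has_derivative_imp_has_field_derivative)
            have "((\<lambda>s. y + s *\<^sub>R d) has_derivative (\<lambda>h. h *\<^sub>R d)) (at s)"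
              by (auto intro!: derivative_eq_intros)
            then show "((\<lambda>s. g i (y + s *\<^sub>R d)) has_derivative (\<lambda>h. Dg i (y + s *\<^sub>R d) (h *\<^sub>R d))) (at s)"
              using has_derivative_compose Dg[OF i] by blast
            fix h :: real
            show "h * Dg i (y + s *\<^sub>R d) d = Dg i (y + s *\<^sub>R d) (h *\<^sub>R d)"
              using has_derivative_linear[OF Dg[OF i]] by (simp add: linear_scale)
          qed
          obtain \<xi> where \<xi>: "0 < \<xi>" "\<xi> < t"
            "g i (y + t *\<^sub>R d) - g i (y + 0 *\<^sub>R d) = (t - 0) * Dg i (y + \<xi> *\<^sub>R d) d"
            using MVT2[OF tp, of "\<lambda>s. g i (y + s *\<^sub>R d)" "\<lambda>s. Dg i (y + s *\<^sub>R d) d"] der by blast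
          have "Dg i (y + \<xi> *\<^sub>R d) d > 1/2"
            using \<delta>[OF near[of \<xi>]] \<xi> i True by auto
          then have "t * Dg i (y + \<xi> *\<^sub>R d) d \<ge> t * (1/2)" using tp by simp
          then show ?thesis using \<xi>(3) mg[OF i] unfolding w_def t_def G_def by simp
        qed
      qed
    qed
    have "infdist y (semialg_set r g) \<le> dist y w" by (rule infdist_le[OF wS])
    also have "dist y w = t * norm d" unfolding w_def dist_norm using t0 by simp
    also have "\<dots> \<le> c * G" unfolding c_def t_def using t0 unfolding t_def
      by (simp add: algebra_simps)
    finally show ?thesis using GG by simp
  qed
  show ?thesis
  proof (intro exI conjI allI impI)
    show "\<epsilon> > 0" unfolding \<epsilon>_def using \<eta>0 \<delta>0 by simp
    show "c > 0" unfolding c_def by (simp add: add_nonneg_pos)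
    fix y :: "real^'n"
    assume h1: "infdist y (semialg_set r g) = dist y z" and h2: "infdist y (semialg_set r g) \<le> \<epsilon>"
    have "dist y z \<le> \<epsilon>" using h1 h2 by linarith
    then show "infdist y (semialg_set r g) \<le> c * Gviol r g y" by (rule key)
  qed
qed

end
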